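(* Let $\Gamma$ be a set of $\langle\cdot\rangle$-free formulas and $\phi$ a $\langle\cdot\rangle$-free formula. (1) If $\phi$ is derivable from $\Gamma$ in the Hilbert system $H_1$, then $\Gamma\vdash_{\mathbf{Ck}+\mathrm{cut}}\phi$. (2) If $\phi$ is derivable from $\Gamma$ in the Hilbert system $H_2$, then $\Gamma\vdash_{\mathbf{CK}}\phi$.
   Context: Formulas: built from propositional variables and the constant $\bot$ using $\lnot$, the binary connectives $\supset,\land,\lor$, and two binary conditional operators $[\phi]\psi$ and $\langle\phi\rangle\psi$ (treated as primitive by tableau rules). $\top$ abbreviates $\lnot\bot$; $\phi\equiv\psi$ abbreviates $(\phi\supset\psi)\land(\psi\supset\phi)$. "$\langle\cdot\rangle$-free" means not containing the operator $\langle\cdot\rangle$. Hilbert systems: the theorems of $H_1$ form the smallest set of $\langle\cdot\rangle$-free formulas containing all substitution instances of propositional tautologies and all instances of CM: $[\phi](\psi\land\theta)\supset([\phi]\psi\land[\phi]\theta)$, CC: $([\phi]\psi\land[\phi]\theta)\supset[\phi](\psi\land\theta)$, CN: $[\phi]\top$, and closed under modus ponens and RCEC (from $\psi\equiv\theta$ infer $[\phi]\psi\equiv[\phi]\theta$). $H_2$ is defined the same way but additionally closed under RCEA (from $\phi\equiv\psi$ infer $[\phi]\theta\equiv[\psi]\theta$). $\phi$ is derivable from $\Gamma$ in $H_n$ if there is a finite sequence ending in $\phi$ each member of which is in $\Gamma$, a theorem of $H_n$, or follows from earlier members by modus ponens. Tableaux: indices are positive integers. Prefixed formulas are expressions $i:\phi$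 and $i\,r_\phi\,j$. For a set $\Gamma$ of formulas and a formula $\phi$, a tableau for $(\Gamma,\phi)$ is a finite downward-branching tree labelled by prefixed formulas, each of which is either an assumption ($1:\psi$ with $\psi\in\Gamma$, or $1:\lnot\phi$) or obtained by applying a branch extension rule to prefixed formulas on its branch; applying a non-branching rule appends its conclusions to the branch, applying a branching rule splits the branch into one child branch per alternative, each alternative appending its listed conclusions. A branch is closed if it contains $i:\chi$ and $i:\lnot\chi$ for some $i,\chi$, or contains $i:\bot$; a tableau is closed if all branches are closed. $\Gamma\vdash_X\phi$ means there is a closed $X$-tableau for $(\Gamma,\phi)$. Basic ($\mathbf{Ck}$) rules: from $i:\phi\land\psi$ add $i:\phi,i:\psi$; from $i:\lnot(\phi\land\psi)$ branch into $i:\lnot\phi\mid i:\lnot\psi$; from $i:\phi\lor\psi$ branch into $i:\phi\mid i:\psi$; from $i:\lnot(\phi\lor\psi)$ add $i:\lnot\phi,i:\lnot\psi$; from $i:\phi\supset\psi$ branch into $i:\lnot\phi\mid i:\psi$; from $i:\lnot(\phi\supset\psi)$ add $i:\phi,i:\lnot\psi$; from $i:\lnot\lnot\phi$ add $i:\phi$; ($\Box$) from $i:[\phi]\psi$ and $i\,r_\phi\,j$ add $j:\psi$; ($\lnot\Box$) from $i:\lnot[\phi]\psi$ add $i\,r_\phi\,j$ and $j:\lnot\psi$ with $j$ new to the branch; ($\Diamond$) from $i:\langle\phi\rangle\psi$ add $i\,r_\phi\,j$ and $j:\psi$ with $j$ new; ($\lnot\Diamond$) from $i:\lnot\langle\phi\rangle\psi$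 and $i\,r_\phi\,j$ add $j:\lnot\psi$. (cut) for any index $i$ already on the branch and any formula $\phi$, branch into $i:\phi\mid i:\lnot\phi$. (ea) from $i\,r_\phi\,j$ and any formula $\psi$, branch into ($k:\lnot\phi$, $k:\psi$) $\mid$ ($k:\phi$, $k:\lnot\psi$) $\mid$ $i\,r_\psi\,j$, with $k$ new to the branch. $\mathbf{Ck}+\mathrm{cut}$ uses the basic rules and cut; $\mathbf{CK}$ uses the basic rules, cut and ea. *)

theory Defs
  imports Main
begin

datatype fm =
    Var nat
  | Bot
  | Neg fm
  | Imp fm fm
  | And fm fm
  | Or fm fm
  | Box fm fm   (* [phi] psi *)
  | Dia fm fm   (* <phi> psi *)

definition Top :: fm where "Top = Neg Bot"

definition Iff :: "fm \<Rightarrow> fm \<Rightarrow> fm" where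
  "Iff a b = And (Imp a b) (Imp b a)"

fun dfree :: "fm \<Rightarrow> bool" where
  "dfree (Var n) = True"
| "dfree Bot = True"
| "dfree (Neg a) = dfree a"
| "dfree (Imp a b) = (dfree a \<and> dfree b)"
| "dfree (And a b) = (dfree a \<and> dfree b)"
| "dfree (Or a b) = (dfree a \<and> dfree b)"
| "dfree (Box a b) = (dfree a \<and> dfree b)"
| "dfree (Dia a b) = False"

fun pure :: "fm \<Rightarrow> bool" where
  "pure (Var n) = True"
| "pure Bot = True"
| "pure (Neg a) = pure a"
| "pure (Imp a b) = (pure a \<and> pure b)"
| "pure (And a b) = (pure a \<and> pure b)"
| "pure (Or a b) = (pure a \<and> pure b)"
| "pure (Box a b) = False"
| "pure (Dia a b) = False"

fun peval :: "(nat \<Rightarrow> bool) \<Rightarrow> fm \<Rightarrow> bool" where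
  "peval v (Var n) = v n"
| "peval v Bot = False"
| "peval v (Neg a) = (\<not> peval v a)"
| "peval v (Imp a b) = (peval v a \<longrightarrow> peval v b)"
| "peval v (And a b) = (peval v a \<and> peval v b)"
| "peval v (Or a b) = (peval v a \<or> peval v b)"
| "peval v (Box a b) = False"
| "peval v (Dia a b) = False"

fun subst :: "(nat \<Rightarrow> fm) \<Rightarrow> fm \<Rightarrow> fm" where
  "subst s (Var n) = s n"
| "subst s Bot = Bot"
| "subst s (Neg a) = Neg (subst s a)"
| "subst s (Imp a b) = Imp (subst s a) (subst s b)"
| "subst s (And a b) = And (subst s a) (subst s b)"
| "subst s (Or a b) = Or (subst s a) (subst s b)"
| "subst s (Box a b) = Box (subst s a) (subst s b)"
| "subst s (Dia a b) = Dia (subst s a) (subst s b)"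

definition taut_inst :: "fm \<Rightarrow> bool" where
  "taut_inst f \<longleftrightarrow> (\<exists>p s. pure p \<and> (\<forall>v. peval v p) \<and> f = subst s p)"

inductive hthm :: "bool \<Rightarrow> fm \<Rightarrow> bool" for rcea :: bool where
  taut: "taut_inst f \<Longrightarrow> dfree f \<Longrightarrow> hthm rcea f"
| CM: "dfree a \<Longrightarrow> dfree b \<Longrightarrow> dfree c \<Longrightarrow>
        hthm rcea (Imp (Box a (And b c)) (And (Box a b) (Box a c)))"
| CC: "dfree a \<Longrightarrow> dfree b \<Longrightarrow> dfree c \<Longrightarrow>
        hthm rcea (Imp (And (Box a b) (Box a c)) (Box a (And b c)))"
| CN: "dfree a \<Longrightarrow> hthm rcea (Box a Top)"
| MP: "hthm rcea (Imp a b) \<Longrightarrow> hthm rcea a \<Longrightarrow> hthm rcea b"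
| RCEC: "hthm rcea (Iff b c) \<Longrightarrow> dfree a \<Longrightarrow> hthm rcea (Iff (Box a b) (Box a c))"
| RCEA: "rcea \<Longrightarrow> hthm rcea (Iff a b) \<Longrightarrow> dfree c \<Longrightarrow> hthm rcea (Iff (Box a c) (Box b c))"

text \<open>derivability from a set of premises (finite sequences = inductive closure)\<close>
inductive hderiv :: "bool \<Rightarrow> fm set \<Rightarrow> fm \<Rightarrow> bool" for rcea :: bool and \<Gamma> :: "fm set" where
  prem: "f \<in> \<Gamma> \<Longrightarrow> hderiv rcea \<Gamma> f"
| hthm_in: "hthm rcea f \<Longrightarrow> hderiv rcea \<Gamma> f"
| mp: "hderiv rcea \<Gamma> (Imp a b) \<Longrightarrow> hderiv rcea \<Gamma> a \<Longrightarrow> hderiv rcea \<Gamma> b"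

abbreviation "H1_derivable \<equiv> hderiv False"
abbreviation "H2_derivable \<equiv> hderiv True"

text \<open>Prefixed formulas: PF i phi is i:phi, Rel i phi j is i r_phi j. Indices are positive nats.\<close>
datatype pf = PF nat fm | Rel nat fm nat

fun pf_idx :: "pf \<Rightarrow> nat set" where
  "pf_idx (PF i f) = {i}"
| "pf_idx (Rel i f j) = {i, j}"

definition idx :: "pf list \<Rightarrow> nat set" where
  "idx B = (\<Union>x\<in>set B. pf_idx x)"

definition branch_closed :: "pf list \<Rightarrow> bool" where
  "branch_closed B \<longleftrightarrow> (\<exists>i f. PF i f \<in> set B \<and> PF i (Neg f) \<in> set B) \<or> (\<exists>i. PF i Bot \<in> set B)"

text \<open>A rule instance applicable to branch B: the list of alternatives, each a list of
  conclusions appended to the branch (one alternative = non-branching rule).\<close>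
inductive basic_rule :: "pf list \<Rightarrow> pf list list \<Rightarrow> bool" where
  andR: "PF i (And a b) \<in> set B \<Longrightarrow> basic_rule B [[PF i a, PF i b]]"
| nandR: "PF i (Neg (And a b)) \<in> set B \<Longrightarrow> basic_rule B [[PF i (Neg a)], [PF i (Neg b)]]"
| orR: "PF i (Or a b) \<in> set B \<Longrightarrow> basic_rule B [[PF i a], [PF i b]]"
| norR: "PF i (Neg (Or a b)) \<in> set B \<Longrightarrow> basic_rule B [[PF i (Neg a), PF i (Neg b)]]"
| impR: "PF i (Imp a b) \<in> set B \<Longrightarrow> basic_rule B [[PF i (Neg a)], [PF i b]]"
| nimpR: "PF i (Neg (Imp a b)) \<in> set B \<Longrightarrow> basic_rule B [[PF i a, PF i (Neg b)]]"
| nnegR: "PF i (Neg (Neg a)) \<in> set B \<Longrightarrow> basic_rule B [[PF i a]]"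
| boxR: "PF i (Box a b) \<in> set B \<Longrightarrow> Rel i a j \<in> set B \<Longrightarrow> basic_rule B [[PF j b]]"
| nboxR: "PF i (Neg (Box a b)) \<in> set B \<Longrightarrow> 0 < j \<Longrightarrow> j \<notin> idx B \<Longrightarrow>
           basic_rule B [[Rel i a j, PF j (Neg b)]]"
| diaR: "PF i (Dia a b) \<in> set B \<Longrightarrow> 0 < j \<Longrightarrow> j \<notin> idx B \<Longrightarrow>
           basic_rule B [[Rel i a j, PF j b]]"
| ndiaR: "PF i (Neg (Dia a b)) \<in> set B \<Longrightarrow> Rel i a j \<in> set B \<Longrightarrow> basic_rule B [[PF j (Neg b)]]"

inductive cut_rule :: "pf list \<Rightarrow> pf list list \<Rightarrow> bool" where
  "i \<in> idx B \<Longrightarrow> cut_rule B [[PF i f], [PF i (Neg f)]]"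

inductive ea_rule :: "pf list \<Rightarrow> pf list list \<Rightarrow> bool" where
  "Rel i a j \<in> set B \<Longrightarrow> 0 < k \<Longrightarrow> k \<notin> idx B \<Longrightarrow>
     ea_rule B [[PF k (Neg a), PF k b], [PF k a, PF k (Neg b)], [Rel i b j]]"

definition Ck_cut :: "pf list \<Rightarrow> pf list list \<Rightarrow> bool" where
  "Ck_cut B alts \<longleftrightarrow> basic_rule B alts \<or> cut_rule B alts"

definition CK :: "pf list \<Rightarrow> pf list list \<Rightarrow> bool" where
  "CK B alts \<longleftrightarrow> basic_rule B alts \<or> cut_rule B alts \<or> ea_rule B alts"

text \<open>closes R Gamma phi B: the branch B (listed bottom-up) can be extended to a finite
  closed subtree using the rules R and the assumptions for (Gamma, phi).
  A closed R-tableau for (Gamma, phi) exists iff the empty branch closes.\<close>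
inductive closes :: "(pf list \<Rightarrow> pf list list \<Rightarrow> bool) \<Rightarrow> fm set \<Rightarrow> fm \<Rightarrow> pf list \<Rightarrow> bool"
  for R \<Gamma> \<phi> where
  closed: "branch_closed B \<Longrightarrow> closes R \<Gamma> \<phi> B"
| assm_prem: "\<psi> \<in> \<Gamma> \<Longrightarrow> closes R \<Gamma> \<phi> (PF 1 \<psi> # B) \<Longrightarrow> closes R \<Gamma> \<phi> B"
| assm_neg: "closes R \<Gamma> \<phi> (PF 1 (Neg \<phi>) # B) \<Longrightarrow> closes R \<Gamma> \<phi> B"
| step: "R B alts \<Longrightarrow> (\<forall>a\<in>set alts. closes R \<Gamma> \<phi> (rev a @ B)) \<Longrightarrow> closes R \<Gamma> \<phi> B"

definition tab_derivable :: "(pf list \<Rightarrow> pf list list \<Rightarrow> bool) \<Rightarrow> fm set \<Rightarrow> fm \<Rightarrow> bool" where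
  "tab_derivable R \<Gamma> \<phi> \<longleftrightarrow> closes R \<Gamma> \<phi> []"

end

theory Submission
  imports Defs
begin

definition basicR :: "(pf list \<Rightarrow> pf list list \<Rightarrow> bool) \<Rightarrow> bool" where
  "basicR R \<longleftrightarrow> (\<forall>B alts. basic_rule B alts \<longrightarrow> R B alts)"
definition cutR :: "(pf list \<Rightarrow> pf list list \<Rightarrow> bool) \<Rightarrow> bool" where
  "cutR R \<longleftrightarrow> (\<forall>B alts. cut_rule B alts \<longrightarrow> R B alts)"

lemma finite_idx: "finite (idx B)"
proof -
  have "\<And>x. finite (pf_idx x)" by (case_tac x) auto
  thus ?thesis unfolding idx_def by auto
qed

lemma fresh_ex: "\<exists>j. 0 < j \<and> j \<notin> idx B"
proof -
  let ?j = "Suc (Max (insert 0 (idx B)))"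
  have "\<forall>x\<in>idx B. x < ?j" using finite_idx by (simp add: le_imp_less_Suc)
  thus ?thesis by (intro exI[of _ ?j]) auto
qed

lemma idx_PF: "PF i f \<in> set B \<Longrightarrow> i \<in> idx B"
  unfolding idx_def by force

lemma cl: "PF i f \<in> set B \<Longrightarrow> PF i (Neg f) \<in> set B \<Longrightarrow> closes R \<Gamma> \<phi> B"
  by (rule closes.closed) (auto simp: branch_closed_def)

lemma clbot: "PF i Bot \<in> set B \<Longrightarrow> closes R \<Gamma> \<phi> B"
  by (rule closes.closed) (auto simp: branch_closed_def)

lemma cut_l: "cutR R \<Longrightarrow> i \<in> idx B \<Longrightarrow> closes R \<Gamma> \<phi> (PF i f # B) \<Longrightarrow>
   closes R \<Gamma> \<phi> (PF i (Neg f) # B) \<Longrightarrow> closes R \<Gamma> \<phi> B"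
  by (rule closes.step[where alts="[[PF i f], [PF i (Neg f)]]"])
     (auto simp: cutR_def intro: cut_rule.intros)

lemma and_l: "basicR R \<Longrightarrow> PF i (And a b) \<in> set B \<Longrightarrow> closes R \<Gamma> \<phi> (PF i b # PF i a # B)
   \<Longrightarrow> closes R \<Gamma> \<phi> B"
  by (rule closes.step[where alts="[[PF i a, PF i b]]"])
     (auto simp: basicR_def intro: basic_rule.intros)

lemma nand_l: "basicR R \<Longrightarrow> PF i (Neg (And a b)) \<in> set B \<Longrightarrow> closes R \<Gamma> \<phi> (PF i (Neg a) # B)
   \<Longrightarrow> closes R \<Gamma> \<phi> (PF i (Neg b) # B) \<Longrightarrow> closes R \<Gamma> \<phi> B"
  by (rule closes.step[where alts="[[PF i (Neg a)], [PF i (Neg b)]]"])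
     (auto simp: basicR_def intro: basic_rule.intros)

lemma or_l: "basicR R \<Longrightarrow> PF i (Or a b) \<in> set B \<Longrightarrow> closes R \<Gamma> \<phi> (PF i a # B)
   \<Longrightarrow> closes R \<Gamma> \<phi> (PF i b # B) \<Longrightarrow> closes R \<Gamma> \<phi> B"
  by (rule closes.step[where alts="[[PF i a], [PF i b]]"])
     (auto simp: basicR_def intro: basic_rule.intros)

lemma nor_l: "basicR R \<Longrightarrow> PF i (Neg (Or a b)) \<in> set B \<Longrightarrow> closes R \<Gamma> \<phi> (PF i (Neg b) # PF i (Neg a) # B)
   \<Longrightarrow> closes R \<Gamma> \<phi> B"
  by (rule closes.step[where alts="[[PF i (Neg a), PF i (Neg b)]]"])
     (auto simp: basicR_def intro: basic_rule.intros)

lemma imp_l: "basicR R \<Longrightarrow> PF i (Imp a b) \<in> set B \<Longrightarrow> closes R \<Gamma> \<phi> (PF i (Neg a) # B)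
   \<Longrightarrow> closes R \<Gamma> \<phi> (PF i b # B) \<Longrightarrow> closes R \<Gamma> \<phi> B"
  by (rule closes.step[where alts="[[PF i (Neg a)], [PF i b]]"])
     (auto simp: basicR_def intro: basic_rule.intros)

lemma nimp_l: "basicR R \<Longrightarrow> PF i (Neg (Imp a b)) \<in> set B \<Longrightarrow> closes R \<Gamma> \<phi> (PF i (Neg b) # PF i a # B)
   \<Longrightarrow> closes R \<Gamma> \<phi> B"
  by (rule closes.step[where alts="[[PF i a, PF i (Neg b)]]"])
     (auto simp: basicR_def intro: basic_rule.intros)

lemma nneg_l: "basicR R \<Longrightarrow> PF i (Neg (Neg a)) \<in> set B \<Longrightarrow> closes R \<Gamma> \<phi> (PF i a # B)
   \<Longrightarrow> closes R \<Gamma> \<phi> B"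
  by (rule closes.step[where alts="[[PF i a]]"])
     (auto simp: basicR_def intro: basic_rule.intros)

lemma box_l: "basicR R \<Longrightarrow> PF i (Box a b) \<in> set B \<Longrightarrow> Rel i a j \<in> set B \<Longrightarrow> closes R \<Gamma> \<phi> (PF j b # B)
   \<Longrightarrow> closes R \<Gamma> \<phi> B"
  by (rule closes.step[where alts="[[PF j b]]"])
     (auto simp: basicR_def intro: basic_rule.intros)

lemma nbox_l: "basicR R \<Longrightarrow> PF i (Neg (Box a b)) \<in> set B \<Longrightarrow>
   (\<And>j. 0 < j \<Longrightarrow> j \<notin> idx B \<Longrightarrow> closes R \<Gamma> \<phi> (PF j (Neg b) # Rel i a j # B))
   \<Longrightarrow> closes R \<Gamma> \<phi> B"
proof -
  assume a: "basicR R" "PF i (Neg (Box a b)) \<in> set B"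
    "\<And>j. 0 < j \<Longrightarrow> j \<notin> idx B \<Longrightarrow> closes R \<Gamma> \<phi> (PF j (Neg b) # Rel i a j # B)"
  obtain j where j: "0 < j" "j \<notin> idx B" using fresh_ex by blast
  show ?thesis
    by (rule closes.step[where alts="[[Rel i a j, PF j (Neg b)]]"])
       (use a j in \<open>auto simp: basicR_def intro: basic_rule.intros\<close>)
qed

lemma ea_l: "ea_rule \<le> R \<Longrightarrow> Rel i a j \<in> set B \<Longrightarrow>
   (\<And>k. 0 < k \<Longrightarrow> k \<notin> idx B \<Longrightarrow> closes R \<Gamma> \<phi> (PF k b # PF k (Neg a) # B))
   \<Longrightarrow> (\<And>k. 0 < k \<Longrightarrow> k \<notin> idx B \<Longrightarrow> closes R \<Gamma> \<phi> (PF k (Neg b) # PF k a # B))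
   \<Longrightarrow> closes R \<Gamma> \<phi> (Rel i b j # B)
   \<Longrightarrow> closes R \<Gamma> \<phi> B"
proof -
  assume a: "ea_rule \<le> R" "Rel i a j \<in> set B"
   "\<And>k. 0 < k \<Longrightarrow> k \<notin> idx B \<Longrightarrow> closes R \<Gamma> \<phi> (PF k b # PF k (Neg a) # B)"
   "\<And>k. 0 < k \<Longrightarrow> k \<notin> idx B \<Longrightarrow> closes R \<Gamma> \<phi> (PF k (Neg b) # PF k a # B)"
   "closes R \<Gamma> \<phi> (Rel i b j # B)"
  obtain k where k: "0 < k" "k \<notin> idx B" using fresh_ex by blast
  have "ea_rule B [[PF k (Neg a), PF k b], [PF k a, PF k (Neg b)], [Rel i b j]]"
    using a k by (intro ea_rule.intros)
  hence "R B [[PF k (Neg a), PF k b], [PF k a, PF k (Neg b)], [Rel i b j]]" using a(1) by auto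
  thus ?thesis
    by (rule closes.step) (use a k in auto)
qed


fun vs :: "fm \<Rightarrow> nat list" where
  "vs (Var n) = [n]"
| "vs Bot = []"
| "vs (Neg a) = vs a"
| "vs (Imp a b) = vs a @ vs b"
| "vs (And a b) = vs a @ vs b"
| "vs (Or a b) = vs a @ vs b"
| "vs (Box a b) = []"
| "vs (Dia a b) = []"

definition lit :: "(nat \<Rightarrow> fm) \<Rightarrow> nat \<Rightarrow> (nat \<Rightarrow> bool) \<Rightarrow> nat \<Rightarrow> pf" where
  "lit s i v n = (if v n then PF i (s n) else PF i (Neg (s n)))"

lemma taut_L:
  assumes R: "basicR R"
  shows "pure q \<Longrightarrow> (\<forall>n\<in>set (vs q). lit s i v n \<in> set B) \<Longrightarrow>
    (peval v q \<longrightarrow> PF i (Neg (subst s q)) \<in> set B \<longrightarrow> closes R \<Gamma> \<phi> B) \<and>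
    (\<not> peval v q \<longrightarrow> PF i (subst s q) \<in> set B \<longrightarrow> closes R \<Gamma> \<phi> B)"
proof (induction q arbitrary: B)
  case (Var n)
  then show ?case by (cases "v n") (simp_all add: lit_def cl)
next
  case Bot
  then show ?case by (auto intro: clbot)
next
  case (Neg a)
  show ?case
  proof (intro conjI impI)
    assume h: "peval v (Neg a)" "PF i (Neg (subst s (Neg a))) \<in> set B"
    show "closes R \<Gamma> \<phi> B"
      apply (rule nneg_l[OF R, where a="subst s a"])
      using h Neg.prems Neg.IH[of "PF i (subst s a) # B"] by auto
  next
    assume "\<not> peval v (Neg a)" "PF i (subst s (Neg a)) \<in> set B"
    then show "closes R \<Gamma> \<phi> B" using Neg.prems Neg.IH[of B] by auto
  qed
next
  case (Imp a b)
  show ?case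
  proof (intro conjI impI)
    assume h: "peval v (Imp a b)" "PF i (Neg (subst s (Imp a b))) \<in> set B"
    show "closes R \<Gamma> \<phi> B"
    proof (rule nimp_l[OF R])
      show "PF i (Neg (Imp (subst s a) (subst s b))) \<in> set B" using h by simp
      show "closes R \<Gamma> \<phi> (PF i (Neg (subst s b)) # PF i (subst s a) # B)"
        using h Imp.prems Imp.IH[of "PF i (Neg (subst s b)) # PF i (subst s a) # B"] by auto
    qed
  next
    assume h: "\<not> peval v (Imp a b)" "PF i (subst s (Imp a b)) \<in> set B"
    show "closes R \<Gamma> \<phi> B"
    proof (rule imp_l[OF R])
      show "PF i (Imp (subst s a) (subst s b)) \<in> set B" using h by simp
      show "closes R \<Gamma> \<phi> (PF i (Neg (subst s a)) # B)"
        using h Imp.prems Imp.IH(1)[of "PF i (Neg (subst s a)) # B"] by auto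
      show "closes R \<Gamma> \<phi> (PF i (subst s b) # B)"
        using h Imp.prems Imp.IH(2)[of "PF i (subst s b) # B"] by auto
    qed
  qed
next
  case (And a b)
  show ?case
  proof (intro conjI impI)
    assume h: "peval v (And a b)" "PF i (Neg (subst s (And a b))) \<in> set B"
    show "closes R \<Gamma> \<phi> B"
    proof (rule nand_l[OF R])
      show "PF i (Neg (And (subst s a) (subst s b))) \<in> set B" using h by simp
      show "closes R \<Gamma> \<phi> (PF i (Neg (subst s a)) # B)"
        using h And.prems And.IH(1)[of "PF i (Neg (subst s a)) # B"] by auto
      show "closes R \<Gamma> \<phi> (PF i (Neg (subst s b)) # B)"
        using h And.prems And.IH(2)[of "PF i (Neg (subst s b)) # B"] by auto
    qed
  next
    assume h: "\<not> peval v (And a b)" "PF i (subst s (And a b)) \<in> set B"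
    show "closes R \<Gamma> \<phi> B"
    proof (rule and_l[OF R])
      show "PF i (And (subst s a) (subst s b)) \<in> set B" using h by simp
      show "closes R \<Gamma> \<phi> (PF i (subst s b) # PF i (subst s a) # B)"
        using h And.prems And.IH[of "PF i (subst s b) # PF i (subst s a) # B"] by auto
    qed
  qed
next
  case (Or a b)
  show ?case
  proof (intro conjI impI)
    assume h: "peval v (Or a b)" "PF i (Neg (subst s (Or a b))) \<in> set B"
    show "closes R \<Gamma> \<phi> B"
    proof (rule nor_l[OF R])
      show "PF i (Neg (Or (subst s a) (subst s b))) \<in> set B" using h by simp
      show "closes R \<Gamma> \<phi> (PF i (Neg (subst s b)) # PF i (Neg (subst s a)) # B)"
        using h Or.prems Or.IH[of "PF i (Neg (subst s b)) # PF i (Neg (subst s a)) # B"] by auto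
    qed
  next
    assume h: "\<not> peval v (Or a b)" "PF i (subst s (Or a b)) \<in> set B"
    show "closes R \<Gamma> \<phi> B"
    proof (rule or_l[OF R])
      show "PF i (Or (subst s a) (subst s b)) \<in> set B" using h by simp
      show "closes R \<Gamma> \<phi> (PF i (subst s a) # B)"
        using h Or.prems Or.IH(1)[of "PF i (subst s a) # B"] by auto
      show "closes R \<Gamma> \<phi> (PF i (subst s b) # B)"
        using h Or.prems Or.IH(2)[of "PF i (subst s b) # B"] by auto
    qed
  qed
next
  case (Box a b) then show ?case by simp
next
  case (Dia a b) then show ?case by simp
qed

lemma taut_C:
  assumes R: "basicR R" and C: "cutR R" and p: "pure p" and t: "\<forall>v. peval v p"
  shows "PF i (Neg (subst s p)) \<in> set B \<Longrightarrow>
    (\<forall>n. n \<in> set (vs p) \<longrightarrow> n \<notin> set ns \<longrightarrow> lit s i v n \<in> set B) \<Longrightarrow> closes R \<Gamma> \<phi> B"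
proof (induction ns arbitrary: B v)
  case Nil
  then show ?case using taut_L[OF R p, of s i v B] t by auto
next
  case (Cons n ns)
  have ix: "i \<in> idx B" using Cons.prems(1) by (rule idx_PF)
  show ?case
  proof (rule cut_l[OF C ix, where f="s n"])
    show "closes R \<Gamma> \<phi> (PF i (s n) # B)"
      apply (rule Cons.IH[where v="v(n:=True)"]) using Cons.prems by (auto simp: lit_def)
    show "closes R \<Gamma> \<phi> (PF i (Neg (s n)) # B)"
      apply (rule Cons.IH[where v="v(n:=False)"]) using Cons.prems by (auto simp: lit_def)
  qed
qed

lemma taut_valid:
  assumes R: "basicR R" and C: "cutR R" and "taut_inst f"
  shows "closes R \<Gamma> \<phi> (PF i (Neg f) # B)"
proof -
  obtain p s where ps: "pure p" "\<forall>v. peval v p" "f = subst s p"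
    using assms(3) unfolding taut_inst_def by blast
  show ?thesis using taut_C[OF R C ps(1,2), where i=i and s=s and ns="vs p" and v="\<lambda>_. True"] ps(3) by auto
qed


lemma clx: "(\<exists>x\<in>set B. case x of PF i (Neg f) \<Rightarrow> PF i f \<in> set B | _ \<Rightarrow> False) \<Longrightarrow> closes R \<Gamma> \<phi> B"
  apply (rule closes.closed) unfolding branch_closed_def
  apply (elim bexE) subgoal for x by (cases x; auto split: fm.splits) done

definition valid where
  "valid R \<Gamma> \<phi> f \<longleftrightarrow> (\<forall>i B. closes R \<Gamma> \<phi> (PF i (Neg f) # B))"

lemma valid_CM: assumes R: "basicR R"
  shows "valid R \<Gamma> \<phi> (Imp (Box a (And b c)) (And (Box a b) (Box a c)))"
  unfolding valid_def
proof (intro allI)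
  fix i B
  show "closes R \<Gamma> \<phi> (PF i (Neg (Imp (Box a (And b c)) (And (Box a b) (Box a c)))) # B)"
    apply (rule nimp_l[OF R, where i=i and a="Box a (And b c)" and b="And (Box a b) (Box a c)"], simp)
    apply (rule nand_l[OF R, where i=i and a="Box a b" and b="Box a c"], simp)
     apply (rule nbox_l[OF R, where i=i and a=a and b=b], simp)
    subgoal for j
      apply (rule box_l[OF R, where i=i and a=a and j=j and b="And b c"], simp, simp)
      apply (rule and_l[OF R, where i=j and a=b and b=c], simp)
      apply (rule clx) by simp
    apply (rule nbox_l[OF R, where i=i and a=a and b=c], simp)
    subgoal for j
      apply (rule box_l[OF R, where i=i and a=a and j=j and b="And b c"], simp, simp)
      apply (rule and_l[OF R, where i=j and a=b and b=c], simp)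
      apply (rule clx) by simp
    done
qed

lemma valid_CC: assumes R: "basicR R"
  shows "valid R \<Gamma> \<phi> (Imp (And (Box a b) (Box a c)) (Box a (And b c)))"
  unfolding valid_def
proof (intro allI)
  fix i B
  show "closes R \<Gamma> \<phi> (PF i (Neg (Imp (And (Box a b) (Box a c)) (Box a (And b c)))) # B)"
    apply (rule nimp_l[OF R, where i=i and b="Box a (And b c)" and a="And (Box a b) (Box a c)"], simp)
    apply (rule and_l[OF R, where i=i and a="Box a b" and b="Box a c"], simp)
    apply (rule nbox_l[OF R, where i=i and a=a and b="And b c"], simp)
    subgoal for j
      apply (rule box_l[OF R, where i=i and a=a and j=j and b=b], simp, simp)
      apply (rule box_l[OF R, where i=i and a=a and j=j and b=c], simp, simp)
      apply (rule nand_l[OF R, where i=j and a=b and b=c], simp)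
       apply (rule clx) apply simp
      apply (rule clx) by simp
    done
qed

lemma valid_CN: assumes R: "basicR R"
  shows "valid R \<Gamma> \<phi> (Box a Top)"
  unfolding valid_def Top_def
proof (intro allI)
  fix i B
  show "closes R \<Gamma> \<phi> (PF i (Neg (Box a (Neg Bot))) # B)"
    apply (rule nbox_l[OF R, where i=i and a=a and b="Neg Bot"], simp)
    subgoal for j
      apply (rule nneg_l[OF R, where i=j and a=Bot], simp)
      by (rule clbot[where i=j]) simp
    done
qed

lemma valid_MP: assumes C: "cutR R" and R: "basicR R"
  and h1: "valid R \<Gamma> \<phi> (Imp a b)" and h2: "valid R \<Gamma> \<phi> a"
  shows "valid R \<Gamma> \<phi> b"
  unfolding valid_def
proof (intro allI)
  fix i B
  show "closes R \<Gamma> \<phi> (PF i (Neg b) # B)"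
    apply (rule cut_l[OF C, where i=i and f="Imp a b"])
      apply (simp add: idx_def)
     apply (rule imp_l[OF R, where i=i and a=a and b=b], simp)
    using h2 apply (simp add: valid_def)
     apply (rule clx) apply simp
    using h1 by (simp add: valid_def)
qed

lemma use_valid: "cutR R \<Longrightarrow> valid R \<Gamma> \<phi> f \<Longrightarrow> i \<in> idx B \<Longrightarrow> closes R \<Gamma> \<phi> (PF i f # B)
  \<Longrightarrow> closes R \<Gamma> \<phi> B"
  by (rule cut_l[where f=f]) (auto simp: valid_def)

lemma valid_RCEC: assumes C: "cutR R" and R: "basicR R"
  and h: "valid R \<Gamma> \<phi> (Iff b c)"
  shows "valid R \<Gamma> \<phi> (Iff (Box a b) (Box a c))"
  unfolding valid_def Iff_def
proof (intro allI)
  fix i B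
  show "closes R \<Gamma> \<phi> (PF i (Neg (And (Imp (Box a b) (Box a c)) (Imp (Box a c) (Box a b)))) # B)"
    apply (rule nand_l[OF R, where i=i and a="Imp (Box a b) (Box a c)" and b="Imp (Box a c) (Box a b)"], simp)
     apply (rule nimp_l[OF R, where i=i and a="Box a b" and b="Box a c"], simp)
     apply (rule nbox_l[OF R, where i=i and a=a and b=c], simp)
    subgoal for j
      apply (rule box_l[OF R, where i=i and a=a and j=j and b=b], simp, simp)
      apply (rule use_valid[OF C h, where i=j], simp add: idx_def)
      apply (rule and_l[OF R, where i=j and a="Imp b c" and b="Imp c b"], simp add: Iff_def)
      apply (rule imp_l[OF R, where i=j and a=b and b=c], simp)
       apply (rule clx) apply simp
      apply (rule clx) by simp
     apply (rule nimp_l[OF R, where i=i and a="Box a c" and b="Box a b"], simp)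
     apply (rule nbox_l[OF R, where i=i and a=a and b=b], simp)
    subgoal for j
      apply (rule box_l[OF R, where i=i and a=a and j=j and b=c], simp, simp)
      apply (rule use_valid[OF C h, where i=j], simp add: idx_def)
      apply (rule and_l[OF R, where i=j and a="Imp b c" and b="Imp c b"], simp add: Iff_def)
      apply (rule imp_l[OF R, where i=j and a=c and b=b], simp)
       apply (rule clx) apply simp
      apply (rule clx) by simp
    done
qed

lemma valid_RCEA: assumes C: "cutR R" and R: "basicR R" and E: "ea_rule \<le> R"
  and h: "valid R \<Gamma> \<phi> (Iff a b)"
  shows "valid R \<Gamma> \<phi> (Iff (Box a c) (Box b c))"
  unfolding valid_def Iff_def
proof (intro allI)
  fix i B
  show "closes R \<Gamma> \<phi> (PF i (Neg (And (Imp (Box a c) (Box b c)) (Imp (Box b c) (Box a c)))) # B)"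
    apply (rule nand_l[OF R, where i=i and a="Imp (Box a c) (Box b c)" and b="Imp (Box b c) (Box a c)"], simp)
     apply (rule nimp_l[OF R, where i=i and a="Box a c" and b="Box b c"], simp)
     apply (rule nbox_l[OF R, where i=i and a=b and b=c], simp)
    subgoal for j
      apply (rule ea_l[OF E, where i=i and a=b and j=j and b=a], simp)
      subgoal for k
        apply (rule use_valid[OF C h, where i=k], simp add: idx_def)
        apply (rule and_l[OF R, where i=k and a="Imp a b" and b="Imp b a"], simp add: Iff_def)
        apply (rule imp_l[OF R, where i=k and a=a and b=b], simp)
         apply (rule clx) apply simp
        apply (rule clx) by simp
      subgoal for k
        apply (rule use_valid[OF C h, where i=k], simp add: idx_def)
        apply (rule and_l[OF R, where i=k and a="Imp a b" and b="Imp b a"], simp add: Iff_def)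
        apply (rule imp_l[OF R, where i=k and a=b and b=a], simp)
         apply (rule clx) apply simp
        apply (rule clx) by simp
      apply (rule box_l[OF R, where i=i and a=a and j=j and b=c], simp, simp)
      apply (rule clx) by simp
     apply (rule nimp_l[OF R, where i=i and a="Box b c" and b="Box a c"], simp)
     apply (rule nbox_l[OF R, where i=i and a=a and b=c], simp)
    subgoal for j
      apply (rule ea_l[OF E, where i=i and a=a and j=j and b=b], simp)
      subgoal for k
        apply (rule use_valid[OF C h, where i=k], simp add: idx_def)
        apply (rule and_l[OF R, where i=k and a="Imp a b" and b="Imp b a"], simp add: Iff_def)
        apply (rule imp_l[OF R, where i=k and a=b and b=a], simp)
         apply (rule clx) apply simp
        apply (rule clx) by simp
      subgoal for k
        apply (rule use_valid[OF C h, where i=k], simp add: idx_def)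
        apply (rule and_l[OF R, where i=k and a="Imp a b" and b="Imp b a"], simp add: Iff_def)
        apply (rule imp_l[OF R, where i=k and a=a and b=b], simp)
         apply (rule clx) apply simp
        apply (rule clx) by simp
      apply (rule box_l[OF R, where i=i and a=b and j=j and b=c], simp, simp)
      apply (rule clx) by simp
    done
qed

lemma hthm_valid:
  assumes C: "cutR R" and R: "basicR R" and E: "rcea \<Longrightarrow> ea_rule \<le> R"
  shows "hthm rcea f \<Longrightarrow> valid R \<Gamma> \<phi> f"
proof (induction rule: hthm.induct)
  case (taut f) then show ?case using taut_valid[OF R C] by (simp add: valid_def)
next
  case (CM a b c) then show ?case using valid_CM[OF R] by simp
next
  case (CC a b c) then show ?case using valid_CC[OF R] by simp
next
  case (CN a) then show ?case using valid_CN[OF R] by simp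
next
  case (MP a b) then show ?case using valid_MP[OF C R] by blast
next
  case (RCEC b c a) then show ?case using valid_RCEC[OF C R] by blast
next
  case (RCEA a b c) then show ?case using valid_RCEA[OF C R E] by blast
qed

lemma hderiv_closes:
  assumes C: "cutR R" and R: "basicR R" and E: "rcea \<Longrightarrow> ea_rule \<le> R"
  shows "hderiv rcea \<Gamma> f \<Longrightarrow> \<forall>B. closes R \<Gamma> \<phi> (PF 1 (Neg f) # B)"
proof (induction rule: hderiv.induct)
  case (prem f)
  show ?case
  proof
    fix B
    show "closes R \<Gamma> \<phi> (PF 1 (Neg f) # B)"
      apply (rule closes.assm_prem[OF prem])
      apply (rule clx) by simp
  qed
next
  case (hthm_in f)
  then show ?case using hthm_valid[OF C R E] by (simp add: valid_def)
next
  case (mp a b)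
  show ?case
  proof
    fix B
    show "closes R \<Gamma> \<phi> (PF 1 (Neg b) # B)"
      apply (rule cut_l[OF C, where i=1 and f="Imp a b"])
        apply (simp add: idx_def)
       apply (rule imp_l[OF R, where i=1 and a=a and b=b], simp)
      using mp.IH(2) apply simp
       apply (rule clx) apply simp
      using mp.IH(1) by simp
  qed
qed

lemma tab_from: "cutR R \<Longrightarrow> basicR R \<Longrightarrow> (rcea \<Longrightarrow> ea_rule \<le> R) \<Longrightarrow>
   hderiv rcea \<Gamma> \<phi> \<Longrightarrow> tab_derivable R \<Gamma> \<phi>"
  unfolding tab_derivable_def
  by (rule closes.assm_neg) (use hderiv_closes in blast)

theorem mainTheorem5:
  fixes \<Gamma> :: "fm set" and \<phi> :: fm
  assumes "\<forall>\<psi>\<in>\<Gamma>. dfree \<psi>" and "dfree \<phi>"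
  shows "(H1_derivable \<Gamma> \<phi> \<longrightarrow> tab_derivable Ck_cut \<Gamma> \<phi>)
       \<and> (H2_derivable \<Gamma> \<phi> \<longrightarrow> tab_derivable CK \<Gamma> \<phi>)"
proof -
  have a: "cutR Ck_cut" "basicR Ck_cut" "cutR CK" "basicR CK" "ea_rule \<le> CK"
    by (auto simp: cutR_def basicR_def Ck_cut_def CK_def)
  show ?thesis using tab_from[OF a(1,2), of False] tab_from[OF a(3,4) a(5), of True] by blast
qed

end
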